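(* Let $E/\mathbb{Q}$ be the elliptic curve $y^2=x^3+a_4x+a_6$ with $a_4,a_6\in\mathbb{Z}$, let $(u,v)\in\mathbb{Z}^2$ be map-suitable for $E$, and suppose $-D_E(u,v)$ is a negative fundamental discriminant. Then: (1) For $P\in E(\mathbb{Q})\setminus\{\mathcal{O}\}$, the $\mathrm{SL}_2(\mathbb{Z})$-class in $\mathrm{CL}(-D_E(u,v))$ of the form $F_{P,\mu}$ depends only on $P$ and not on the choice of $\mu$; hence, setting $\Phi_{u,v}(\mathcal{O})$ to be the identity, this defines a map $\Phi_{u,v}:E(\mathbb{Q})\to\mathrm{CL}(-D_E(u,v))$. (2) If $P=(A/C^2,B/C^3)\neq\mathcal{O}$ and $\Phi_{u,v}(P)$ is the identity of $\mathrm{CL}(-D_E(u,v))$, then either $v\mid C$ or $\frac{va}{g^2}\ge d_E(u,v)$, where $a=Av+C^2u$ and $g=\gcd(C,v)$.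
   Context: For integers $u,v$ put $d_E(u,v):=v(u^3+a_4uv^2-a_6v^3)$ and $D_E(u,v):=4d_E(u,v)$. A pair $(u,v)\in\mathbb{Z}^2$ is map-suitable for $E$ if $u$, $v$, $3u^2+a_4v^2$ and $D_E(u,v)$ are all positive. Each $P\in E(\mathbb{Q})\setminus\{\mathcal{O}\}$ is written $P=(A/C^2,B/C^3)$ with $A,B,C\in\mathbb{Z}$, $C>0$, $\gcd(A,C)=\gcd(B,C)=1$; put $a=Av+C^2u$, $g=\gcd(C,v)$, and for an integer $\mu$ with $\frac{C^3}{g^2}\mu\equiv1\pmod{\frac{va}{g^2}}$ let $$F_{P,\mu}(x,y)=\frac{va}{g^2}x^2+2\mu\frac{Bv^2}{g^2}xy+\frac{\mu^2\frac{B^2v^4}{g^4}+d_E(u,v)}{\frac{va}{g^2}}y^2,$$ a positive definite integral form of discriminant $-D_E(u,v)$. $\mathrm{CL}(-D)$ is identified with the group of $\mathrm{SL}_2(\mathbb{Z})$-classes of primitive positive definite forms of discriminant $-D$. *)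

theory Defs
  imports Complex_Main "HOL-Computational_Algebra.Squarefree" "HOL-Number_Theory.Cong"
begin

definition nonsingular_curve :: "int \<Rightarrow> int \<Rightarrow> bool" where
  "nonsingular_curve a4 a6 \<longleftrightarrow> 4 * a4 ^ 3 + 27 * a6 ^ 2 \<noteq> 0"

definition on_curve :: "int \<Rightarrow> int \<Rightarrow> rat \<Rightarrow> rat \<Rightarrow> bool" where
  "on_curve a4 a6 x y \<longleftrightarrow> y ^ 2 = x ^ 3 + of_int a4 * x + of_int a6"

definition dE :: "int \<Rightarrow> int \<Rightarrow> int \<Rightarrow> int \<Rightarrow> int" where
  "dE a4 a6 u v = v * (u ^ 3 + a4 * u * v ^ 2 - a6 * v ^ 3)"

definition DE :: "int \<Rightarrow> int \<Rightarrow> int \<Rightarrow> int \<Rightarrow> int" where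
  "DE a4 a6 u v = 4 * dE a4 a6 u v"

definition map_suitable :: "int \<Rightarrow> int \<Rightarrow> int \<Rightarrow> int \<Rightarrow> bool" where
  "map_suitable a4 a6 u v \<longleftrightarrow>
     u > 0 \<and> v > 0 \<and> 3 * u ^ 2 + a4 * v ^ 2 > 0 \<and> DE a4 a6 u v > 0"

definition fundamental_discriminant :: "int \<Rightarrow> bool" where
  "fundamental_discriminant \<Delta> \<longleftrightarrow> \<Delta> \<noteq> 1 \<and>
     ((\<Delta> mod 4 = 1 \<and> squarefree \<Delta>) \<or>
      (\<Delta> mod 4 = 0 \<and> (\<Delta> div 4) mod 4 \<in> {2, 3} \<and> squarefree (\<Delta> div 4)))"

type_synonym bqf = "int \<times> int \<times> int"

definition bqf_eval :: "bqf \<Rightarrow> int \<Rightarrow> int \<Rightarrow> int" where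
  "bqf_eval f x y = (case f of (a, b, c) \<Rightarrow> a * x ^ 2 + b * x * y + c * y ^ 2)"

definition SL2_equiv :: "bqf \<Rightarrow> bqf \<Rightarrow> bool" where
  "SL2_equiv f f' \<longleftrightarrow> (\<exists>p q r s :: int. p * s - q * r = 1 \<and>
     (\<forall>x y. bqf_eval f' x y = bqf_eval f (p * x + q * y) (r * x + s * y)))"

text \<open>The form F_{P,mu} for P = (A/C^2, B/C^3); all divisions are exact.\<close>
definition F_form :: "int \<Rightarrow> int \<Rightarrow> int \<Rightarrow> int \<Rightarrow> int \<Rightarrow> int \<Rightarrow> int \<Rightarrow> int \<Rightarrow> bqf" where
  "F_form a4 a6 u v A B C \<mu> =
     (let a = A * v + C ^ 2 * u; g = gcd C v; lead = (v * a) div g ^ 2 in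
      (lead, 2 * \<mu> * ((B * v ^ 2) div g ^ 2),
       (\<mu> ^ 2 * ((B ^ 2 * v ^ 4) div g ^ 4) + dE a4 a6 u v) div lead))"

definition mu_admissible :: "int \<Rightarrow> int \<Rightarrow> int \<Rightarrow> int \<Rightarrow> int \<Rightarrow> bool" where
  "mu_admissible u v A C \<mu> \<longleftrightarrow>
     (let a = A * v + C ^ 2 * u; g = gcd C v in
      [(C ^ 3 div g ^ 2) * \<mu> = 1] (mod ((v * a) div g ^ 2)))"

definition principal_form :: "int \<Rightarrow> bqf" where
  "principal_form d = (1, 0, d)"

end

theory Submission
  imports Defs
begin

lemma curve_int:
  fixes A B C :: int
  assumes "C > 0" "on_curve a4 a6 (of_int A / of_int C ^ 2) (of_int B / of_int C ^ 3)"
  shows "B^2 = A^3 + a4*A*C^4 + a6*C^6"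
proof -
  have C0: "(of_int C::rat) \<noteq> 0" using assms(1) by simp
  from assms(2) have that_eq: "(of_int B / of_int C ^ 3)^2 = (of_int A / of_int C ^ 2)^3 + of_int a4 * (of_int A / of_int C ^ 2) + (of_int a6::rat)"
    by (simp add: on_curve_def)
  hence "(of_int B::rat)^2 = of_int A^3 + of_int a4 * of_int A * of_int C^4 + of_int a6 * of_int C^6"
  proof -
    have c8: "(of_int C::rat)^8 \<noteq> 0" using C0 by simp
    from that_eq have "(of_int B::rat)^2 * of_int C^8 = (of_int A^3 + of_int a4 * of_int A * of_int C^4 + of_int a6 * of_int C^6) * of_int C^8"
      using C0 by (simp add: field_simps power_divide)
    thus ?thesis using c8 by simp
  qed
  hence "(of_int (B^2)::rat) = of_int (A^3 + a4*A*C^4 + a6*C^6)" by simp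
  thus ?thesis by (simp only: of_int_eq_iff)
qed

lemma reduce:
  fixes A B C u v :: int
  assumes "C > 0" "v > 0"
  defines "g \<equiv> gcd C v"
  defines "v1 \<equiv> v div g"
  defines "C1 \<equiv> C div g"
  shows "g > 0" "v = g*v1" "C = g*C1"
    "F_form a4 a6 u v A B C \<mu> = (v1*(A*v1+g*C1^2*u), 2*\<mu>*(B*v1^2),
        (\<mu>^2*((B*v1^2)^2) + dE a4 a6 u v) div (v1*(A*v1+g*C1^2*u)))"
    "mu_admissible u v A C \<mu> \<longleftrightarrow> [(g*C1^3)*\<mu> = 1] (mod (v1*(A*v1+g*C1^2*u)))"
proof -
  show g0: "g > 0" using assms(1) by (simp add: g_def)
  show hv: "v = g*v1" by (simp add: v1_def g_def)
  show hC: "C = g*C1" by (simp add: C1_def g_def)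
  have gg: "g^2 \<noteq> 0" "g^4 \<noteq> 0" using g0 by auto
  have e1: "v * (A * v + C ^ 2 * u) = g^2 * (v1*(A*v1+g*C1^2*u))"
    by (subst hv, subst hC, subst hv) (simp add: algebra_simps power2_eq_square)
  have e2: "B * v^2 = g^2 * (B*v1^2)" by (subst hv) (simp add: algebra_simps power2_eq_square)
  have e3: "B^2 * v^4 = g^4 * ((B*v1^2)^2)" by (subst hv) (simp add: algebra_simps power2_eq_square power4_eq_xxxx)
  have e4: "C^3 = g^2 * (g*C1^3)" by (subst hC) (simp add: algebra_simps power2_eq_square power3_eq_cube)
  show "F_form a4 a6 u v A B C \<mu> = (v1*(A*v1+g*C1^2*u), 2*\<mu>*(B*v1^2),
        (\<mu>^2*((B*v1^2)^2) + dE a4 a6 u v) div (v1*(A*v1+g*C1^2*u)))"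
    unfolding F_form_def Let_def g_def[symmetric] e1 e2 e3 e4 using gg by simp
  show "mu_admissible u v A C \<mu> \<longleftrightarrow> [(g*C1^3)*\<mu> = 1] (mod (v1*(A*v1+g*C1^2*u)))"
    unfolding mu_admissible_def Let_def g_def[symmetric] e1 e4 using gg by simp
qed

lemma ident:
  fixes A B g v1 C1 u a4 a6 :: int
  assumes "B^2 = A^3 + a4*A*(g*C1)^4 + a6*(g*C1)^6"
  shows "(B*v1^2)^2 + dE a4 a6 u (g*v1) * (g*C1^3)^2 = (v1*(A*v1+g*C1^2*u)) *
     (A^2*v1^2 - A*g*C1^2*u*v1 + u^2*g^2*C1^4 + a4*g^4*C1^4*v1^2)"
proof -
  have "(B*v1^2)^2 = B^2 * v1^4" by (simp add: power_mult_distrib power_mult[symmetric])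
  also have "\<dots> = (A^3 + a4*A*(g*C1)^4 + a6*(g*C1)^6) * v1^4" by (simp add: assms)
  finally show ?thesis unfolding dE_def by algebra
qed

lemma exact_div:
  fixes L c3 mu beta d R :: int
  assumes "beta^2 + d*c3^2 = L*R" "[c3*mu = 1] (mod L)"
  shows "L dvd (mu^2*beta^2 + d)" "coprime c3 L"
proof -
  have "L dvd c3*mu - 1" using assms(2) by (simp add: cong_iff_dvd_diff)
  then obtain t where t: "c3*mu - 1 = L*t" by blast
  have "c3^2*(mu^2*beta^2 + d) = L*(R + t*(c3*mu+1)*beta^2)"
  proof -
    have "c3^2*(mu^2*beta^2 + d) = ((c3*mu - 1)*(c3*mu+1))*beta^2 + (beta^2 + d*c3^2)"
      by (simp add: algebra_simps power2_eq_square)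
    also have "\<dots> = L*(R + t*(c3*mu+1)*beta^2)" unfolding t assms(1) by (simp add: algebra_simps)
    finally show ?thesis .
  qed
  hence dv: "L dvd c3^2*(mu^2*beta^2 + d)" by simp
  have "coprime (c3*mu) L" using assms(2)
    by (metis cong_imp_coprime cong_sym coprime_1_left)
  thus cp: "coprime c3 L" by simp
  hence "coprime (c3^2) L" by simp
  with dv show "L dvd (mu^2*beta^2 + d)" by (metis coprime_commute coprime_dvd_mult_right_iff)
qed

theorem theorem2p3:
  fixes a4 a6 u v :: int
  assumes E: "nonsingular_curve a4 a6"
    and suit: "map_suitable a4 a6 u v"
    and fund: "fundamental_discriminant (- DE a4 a6 u v)"
  shows "(\<forall>A B C \<mu> \<mu>'. C > 0 \<and> coprime A C \<and> coprime B C \<and>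
            on_curve a4 a6 (of_int A / of_int C ^ 2) (of_int B / of_int C ^ 3) \<and>
            mu_admissible u v A C \<mu> \<and> mu_admissible u v A C \<mu>' \<longrightarrow>
            SL2_equiv (F_form a4 a6 u v A B C \<mu>) (F_form a4 a6 u v A B C \<mu>'))
       \<and> (\<forall>A B C \<mu>. C > 0 \<and> coprime A C \<and> coprime B C \<and>
            on_curve a4 a6 (of_int A / of_int C ^ 2) (of_int B / of_int C ^ 3) \<and>
            mu_admissible u v A C \<mu> \<and>
            SL2_equiv (F_form a4 a6 u v A B C \<mu>) (principal_form (dE a4 a6 u v)) \<longrightarrow>
            v dvd C \<or> (v * (A * v + C ^ 2 * u)) div (gcd C v) ^ 2 \<ge> dE a4 a6 u v)"
proof -
  have v0: "v > 0" using suit by (simp add: map_suitable_def)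
  have d0: "dE a4 a6 u v > 0" using suit by (simp add: map_suitable_def DE_def)
  define d where "d = dE a4 a6 u v"
  have part1: "SL2_equiv (F_form a4 a6 u v A B C \<mu>) (F_form a4 a6 u v A B C \<mu>')"
    if C0: "C > 0" and cur: "on_curve a4 a6 (of_int A / of_int C ^ 2) (of_int B / of_int C ^ 3)"
      and m1: "mu_admissible u v A C \<mu>" and m2: "mu_admissible u v A C \<mu>'" for A B C \<mu> \<mu>'
  proof -
    define g where "g = gcd C v"
    define v1 where "v1 = v div g"
    define C1 where "C1 = C div g"
    note R = reduce[OF C0 v0, folded g_def v1_def C1_def]
    define L where "L = v1*(A*v1+g*C1^2*u)"
    define beta where "beta = B*v1^2"
    define c3 where "c3 = g*C1^3"
    define R1 where "R1 = A^2*v1^2 - A*g*C1^2*u*v1 + u^2*g^2*C1^4 + a4*g^4*C1^4*v1^2"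
    have B2: "B^2 = A^3 + a4*A*(g*C1)^4 + a6*(g*C1)^6"
      using curve_int[OF C0 cur] R(3) by simp
    have id: "beta^2 + d*c3^2 = L*R1"
      using ident[OF B2, of v1 u] R(2) by (simp add: beta_def d_def c3_def L_def R1_def)
    have F: "F_form a4 a6 u v A B C m = (L, 2*m*beta, (m^2*beta^2 + d) div L)" for m
      by (simp only: R(4) L_def beta_def d_def)
    have c1: "[c3*\<mu> = 1] (mod L)" using m1 R(5) unfolding c3_def L_def by simp
    have c2: "[c3*\<mu>' = 1] (mod L)" using m2 R(5) unfolding c3_def L_def by simp
    note ex1 = exact_div[OF id c1]
    note ex2 = exact_div[OF id c2]
    show ?thesis
    proof (cases "\<mu> = \<mu>'")
      case True
      show ?thesis unfolding True SL2_equiv_def by (rule exI[of _ 1], rule exI[of _ 0], rule exI[of _ 0], rule exI[of _ 1]) simp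
    next
      case False
      have "[c3*\<mu>' = c3*\<mu>] (mod L)" using c1 c2 by (meson cong_sym cong_trans)
      hence "L dvd c3*(\<mu>' - \<mu>)" by (simp add: cong_iff_dvd_diff algebra_simps)
      hence "L dvd \<mu>' - \<mu>" using ex1(2) by (metis coprime_commute coprime_dvd_mult_right_iff)
      then obtain k where k: "\<mu>' = \<mu> + L*k" by (metis add_diff_cancel_left' add_diff_eq dvdE)
      have L0: "L \<noteq> 0" using k False by auto
      obtain c where c: "\<mu>^2*beta^2 + d = L*c" using ex1(1) by blast
      obtain c' where c': "\<mu>'^2*beta^2 + d = L*c'" using ex2(1) by blast
      have "L*c' = L*(L*(k*beta)^2 + 2*\<mu>*beta*(k*beta) + c)"
        unfolding c'[symmetric] k by (simp add: algebra_simps power2_eq_square c[symmetric])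
      hence cc: "c' = L*(k*beta)^2 + 2*\<mu>*beta*(k*beta) + c" using L0 by simp
      have d1: "(\<mu>^2*beta^2 + d) div L = c" using c L0 by simp
      have d2: "(\<mu>'^2*beta^2 + d) div L = c'" using c' L0 by simp
      have "\<forall>x y. bqf_eval (L, 2*\<mu>'*beta, c') x y =
         bqf_eval (L, 2*\<mu>*beta, c) (1 * x + (k*beta) * y) (0 * x + 1 * y)"
        by (simp add: bqf_eval_def cc k algebra_simps power2_eq_square)
      hence "\<exists>p q r s :: int. p * s - q * r = 1 \<and> (\<forall>x y. bqf_eval (L, 2*\<mu>'*beta, c') x y =
         bqf_eval (L, 2*\<mu>*beta, c) (p * x + q * y) (r * x + s * y))" by (intro exI[of _ 1] exI[of _ "k*beta"] exI[of _ 0]) simp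
      thus ?thesis unfolding SL2_equiv_def F d1 d2 .
    qed
  qed
  have part2: "v dvd C \<or> (v * (A * v + C ^ 2 * u)) div (gcd C v) ^ 2 \<ge> d"
    if C0: "C > 0" and cur: "on_curve a4 a6 (of_int A / of_int C ^ 2) (of_int B / of_int C ^ 3)"
      and m1: "mu_admissible u v A C \<mu>"
      and eqv: "SL2_equiv (F_form a4 a6 u v A B C \<mu>) (principal_form d)" for A B C \<mu>
  proof -
    define g where "g = gcd C v"
    define v1 where "v1 = v div g"
    define C1 where "C1 = C div g"
    note R = reduce[OF C0 v0, folded g_def v1_def C1_def]
    define L where "L = v1*(A*v1+g*C1^2*u)"
    define beta where "beta = B*v1^2"
    define c3 where "c3 = g*C1^3"
    define R1 where "R1 = A^2*v1^2 - A*g*C1^2*u*v1 + u^2*g^2*C1^4 + a4*g^4*C1^4*v1^2"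
    have B2: "B^2 = A^3 + a4*A*(g*C1)^4 + a6*(g*C1)^6"
      using curve_int[OF C0 cur] R(3) by simp
    have id: "beta^2 + d*c3^2 = L*R1"
      using ident[OF B2, of v1 u] R(2) by (simp add: beta_def d_def c3_def L_def R1_def)
    have F: "F_form a4 a6 u v A B C m = (L, 2*m*beta, (m^2*beta^2 + d) div L)" for m
      by (simp only: R(4) L_def beta_def d_def)
    have c1: "[c3*\<mu> = 1] (mod L)" using m1 R(5) unfolding c3_def L_def by simp
    note ex1 = exact_div[OF id c1]
    obtain c where c: "\<mu>^2*beta^2 + d = L*c" using ex1(1) by blast
    have Ldef: "(v * (A * v + C ^ 2 * u)) div (gcd C v) ^ 2 = L"
    proof -
      have "v * (A * v + C ^ 2 * u) = g^2 * L" unfolding L_def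
        by (subst R(2), subst R(3), subst R(2)) (simp add: algebra_simps power2_eq_square)
      thus ?thesis using R(1) unfolding g_def by simp
    qed
    show ?thesis
    proof (cases "L = 0")
      case True
      with c have "\<mu>^2*beta^2 + d = 0" by simp
      moreover have "\<mu>^2*beta^2 \<ge> 0" by simp
      ultimately show ?thesis using d0 unfolding d_def by linarith
    next
      case L0: False
      have cdef: "(\<mu>^2*beta^2 + d) div L = c" using c L0 by simp
      from eqv obtain p q r s where "\<forall>x y. bqf_eval (principal_form d) x y =
         bqf_eval (L, 2*\<mu>*beta, c) (p * x + q * y) (r * x + s * y)"
        unfolding SL2_equiv_def F cdef by blast
      from this[rule_format, of 1 0] have one: "L*p^2 + 2*\<mu>*beta*p*r + c*r^2 = 1"
        by (simp add: bqf_eval_def principal_form_def)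
      have key: "L = (L*p + \<mu>*beta*r)^2 + d*r^2"
      proof -
        have "L = L*(L*p^2 + 2*\<mu>*beta*p*r + c*r^2)" using one by simp
        also have "\<dots> = L^2*p^2 + 2*\<mu>*beta*p*r*L + (L*c)*r^2" by (simp add: algebra_simps power2_eq_square)
        also have "\<dots> = (L*p + \<mu>*beta*r)^2 + d*r^2" unfolding c[symmetric] by (simp add: algebra_simps power2_eq_square)
        finally show ?thesis .
      qed
      show ?thesis
      proof (cases "r = 0")
        case True
        with one have "L*p^2 = 1" by simp
        hence "L = 1 \<and> p^2 = 1 \<or> L = -1 \<and> p^2 = -1" by (simp only: zmult_eq_1_iff)
        moreover have "p^2 \<ge> 0" by simp
        ultimately have "L = 1" by auto
        hence "v1 * (A*v1+g*C1^2*u) = 1" unfolding L_def .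
        moreover have "v1 > 0" using R(1,2) v0 by (metis pos_imp_zdiv_pos_iff v1_def zero_less_mult_pos)
        ultimately have "v1 = 1" by (metis pos_zmult_eq_1_iff)
        hence "v = g" using R(2) by simp
        hence "v dvd C" unfolding g_def by (metis gcd_dvd1)
        thus ?thesis ..
      next
        case False
        have "r^2 \<ge> 1" using False by (smt (verit) power2_less_eq_zero_iff zero_le_power2 int_one_le_iff_zero_less)
        hence "d*r^2 \<ge> d" using d0 unfolding d_def using mult_left_mono[of 1 "r^2" d] by simp
        moreover have "(L*p + \<mu>*beta*r)^2 \<ge> 0" by simp
        ultimately have "L \<ge> d" using key by linarith
        thus ?thesis unfolding Ldef by simp
      qed
    qed
  qed
  show ?thesis using part1 part2 unfolding d_def by blast
qed

end
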